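(* Let $n\ge3$ and let $x^\Lambda\partial_k,x^\Theta\partial_u\in\mathcal{B}$ with $[x^\Lambda\partial_k,x^\Theta\partial_u]\ne0$. Then for every integer $i\ge-1$, \[\mathrm{lev}_i([x^\Lambda\partial_k,x^\Theta\partial_u])=\mathrm{lev}_i(x^\Lambda\partial_k)+\mathrm{lev}_i(x^\Theta\partial_u)-h_i(n-1)\] and \[\mathrm{WD}([x^\Lambda\partial_k,x^\Theta\partial_u])=\mathrm{WD}(x^\Lambda\partial_k)+\mathrm{WD}(x^\Theta\partial_u)-(n-1).\] Moreover, if $\mathrm{lev}_i(x^\Lambda\partial_k)\le i$ and $\mathrm{lev}_j(x^\Theta\partial_u)\le j$ for some $i,j\ge-1$, then \[\mathrm{WD}([x^\Lambda\partial_k,x^\Theta\partial_u])\le\min\bigl(\mathrm{WD}(x^\Lambda\partial_k),\mathrm{WD}(x^\Theta\partial_u)\bigr),\] with equality if and only if one of $x^\Lambda\partial_k$, $x^\Theta\partial_u$ equals $\partial_1$.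
   Context: Fix an integer $n\ge 3$. A partition is a sequence $\Lambda=(\lambda_j)_{j\ge1}$ of non-negative integers with finite support; $\mathrm{wt}(\Lambda)=\sum_j j\lambda_j$; $\mathrm{Part}(k)$ is the set of partitions with $\lambda_j=0$ for $j>k$. Write $x^\Lambda=\prod_j x_j^{\lambda_j}$, $\deg(x^\Lambda)=\sum_j\lambda_j$, and let $\partial_k$ be the partial derivative with respect to $x_k$. $\mathfrak{L}(n)$ is the free $\mathbb{Z}$-module with basis $\mathcal{B}=\{x^\Lambda\partial_k : 1\le k\le n,\ \Lambda\in\mathrm{Part}(k-1)\}$, a Lie ring with bracket defined on basis elements by $[x^\Lambda\partial_k,x^\Theta\partial_j]=\partial_j(x^\Lambda)x^\Theta\partial_k$ if $j<k$, $-x^\Lambda\partial_k(x^\Theta)\partial_j$ if $j>k$, $0$ if $j=k$, extended bilinearly; thus a nonzero bracket of two basis elements is $c\cdot x^\Gamma\partial_v$ for a nonzero integer $c$ and $x^\Gamma\partial_v\in\mathcal{B}$. For an integer $i\ge-1$, let $r_i\in\{1,\dots,n-1\}$ with $i\equiv r_i\pmod{n-1}$ and $h_i=\lfloor (i-1)/(n-1)\rfloor+1$. For a nonzero integer $c$ and $x^\Lambda\partial_k\in\mathcal{B}$ define $\mathrm{WD}(c\,x^\Lambda\partial_k)=\mathrm{wt}(\Lambda)-\deg(x^\Lambda)+n-k$ and $\mathrm{lev}_i(c\,x^\Lambda\partial_k)=h_i\,\mathrm{WD}(x^\Lambda\partial_k)+\deg(x^\Lambda)-1$. *)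

theory Defs
  imports Main
begin

text \<open>A partition is a finitely supported sequence indexed by j \<ge> 1; we represent it
  as a function nat \<Rightarrow> nat whose value at 0 is 0 (index 0 is unused).
  A basis element x^Lambda d_k is represented by the pair (Lambda, k).\<close>

type_synonym partition = "nat \<Rightarrow> nat"
type_synonym basis_elt = "partition \<times> nat"

definition Part :: "nat \<Rightarrow> partition set" where
  "Part k = {L. \<forall>j. (j = 0 \<or> k < j) \<longrightarrow> L j = 0}"

definition basis :: "nat \<Rightarrow> basis_elt set" where
  "basis n = {(L, k). 1 \<le> k \<and> k \<le> n \<and> L \<in> Part (k - 1)}"

definition wt :: "partition \<Rightarrow> nat" where
  "wt L = (\<Sum>j\<in>{j. L j \<noteq> 0}. j * L j)"

definition deg :: "partition \<Rightarrow> nat" where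
  "deg L = (\<Sum>j\<in>{j. L j \<noteq> 0}. L j)"

text \<open>The bracket of two basis elements, returned as (c, x^Gamma d_v); it is zero iff c = 0.
  d_j(x^Lambda) = lambda_j x^(Lambda - e_j).\<close>

definition bracket :: "basis_elt \<Rightarrow> basis_elt \<Rightarrow> int \<times> basis_elt" where
  "bracket a b = (case a of (L, k) \<Rightarrow> case b of (T, j) \<Rightarrow>
     if j < k then (int (L j), (\<lambda>t. (L(j := L j - 1)) t + T t, k))
     else if k < j then (- int (T k), (\<lambda>t. L t + (T(k := T k - 1)) t, j))
     else (0, (\<lambda>_. 0, k)))"

definition WD :: "nat \<Rightarrow> basis_elt \<Rightarrow> int" where
  "WD n a = (case a of (L, k) \<Rightarrow> int (wt L) - int (deg L) + int n - int k)"

definition hh :: "nat \<Rightarrow> int \<Rightarrow> int" where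
  "hh n i = (i - 1) div (int n - 1) + 1"

definition lev :: "nat \<Rightarrow> int \<Rightarrow> basis_elt \<Rightarrow> int" where
  "lev n i a = hh n i * WD n a + int (deg (fst a)) - 1"

definition d1 :: basis_elt where
  "d1 = ((\<lambda>_. 0), 1)"

end

theory Submission
  imports Defs
begin

lemma sum_bound:
  fixes f :: "nat \<Rightarrow> nat"
  assumes "\<forall>t>m. L t = 0"
  shows "(\<Sum>j\<in>{j. L j \<noteq> 0}. f j * L j) = (\<Sum>t\<le>m. f t * L t)"
proof (rule sum.mono_neutral_left)
  show "{j. L j \<noteq> 0} \<subseteq> {..m}"
  proof
    fix x assume "x \<in> {j. L j \<noteq> 0}"
    then show "x \<in> {..m}" using assms by (cases "x \<le> m") auto
  qed
qed auto

lemma wt_bound: "\<forall>t>m. L t = 0 \<Longrightarrow> wt L = (\<Sum>t\<le>m. t * L t)"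
  unfolding wt_def using sum_bound[of m L "\<lambda>t. t"] by simp

lemma deg_bound: "\<forall>t>m. L t = 0 \<Longrightarrow> deg L = (\<Sum>t\<le>m. L t)"
  unfolding deg_def using sum_bound[of m L "\<lambda>t. 1"] by simp

lemma upd_sum:
  fixes f :: "nat \<Rightarrow> nat"
  assumes "finite A" "j \<in> A" "0 < L j"
  shows "(\<Sum>t\<in>A. f t * (L(j := L j - 1)) t) + f j = (\<Sum>t\<in>A. f t * L t)"
proof -
  have "(\<Sum>t\<in>A. f t * (L(j := L j - 1)) t) = f j * (L j - 1) + (\<Sum>t\<in>A-{j}. f t * L t)"
    using assms by (simp add: sum.remove)
  moreover have "(\<Sum>t\<in>A. f t * L t) = f j * L j + (\<Sum>t\<in>A-{j}. f t * L t)"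
    using assms by (simp add: sum.remove)
  moreover have "f j * (L j - 1) + f j = f j * L j" using assms(3)
    by (cases "L j") auto
  ultimately show ?thesis by simp
qed

lemma basis_D: "(L,k) \<in> basis n \<Longrightarrow> 1 \<le> k \<and> k \<le> n \<and> L 0 = 0 \<and> (\<forall>t. k - 1 < t \<longrightarrow> L t = 0)"
  unfolding basis_def Part_def by auto

lemma core:
  assumes a: "(L,k) \<in> basis n" and b: "(T,j) \<in> basis n" and jA: "j \<le> n" "1 \<le> j" and pos: "0 < L j"
  defines "G \<equiv> (\<lambda>t. (L(j := L j - 1)) t + T t)"
  shows "int (wt G) = int (wt L) + int (wt T) - int j"
    and "int (deg G) = int (deg L) + int (deg T) - 1"
proof -
  have zL: "\<forall>t>n. L t = 0" and zT: "\<forall>t>n. T t = 0" using basis_D[OF a] basis_D[OF b] by auto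
  have zG: "\<forall>t>n. G t = 0" using zL zT unfolding G_def by auto
  have jin: "j \<in> {..n}" using jA by auto
  have "wt G = (\<Sum>t\<le>n. t * (L(j := L j - 1)) t) + (\<Sum>t\<le>n. t * T t)"
    using wt_bound[OF zG] unfolding G_def by (simp add: distrib_left sum.distrib)
  moreover have "(\<Sum>t\<le>n. t * (L(j := L j - 1)) t) + j = wt L"
    using upd_sum[of "{..n}" j L "\<lambda>t. t"] jin pos wt_bound[OF zL] by simp
  ultimately show "int (wt G) = int (wt L) + int (wt T) - int j"
    using wt_bound[OF zT] by linarith
  have "deg G = (\<Sum>t\<le>n. (L(j := L j - 1)) t) + (\<Sum>t\<le>n. T t)"
    using deg_bound[OF zG] unfolding G_def by (simp add: sum.distrib)
  moreover have "(\<Sum>t\<le>n. (L(j := L j - 1)) t) + 1 = deg L"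
    using upd_sum[of "{..n}" j L "\<lambda>t. 1"] jin pos deg_bound[OF zL] by simp
  ultimately show "int (deg G) = int (deg L) + int (deg T) - 1"
    using deg_bound[OF zT] by linarith
qed

lemma core2:
  assumes a: "(L,k) \<in> basis n" and b: "(T,j) \<in> basis n" and jA: "k \<le> n" "1 \<le> k" and pos: "0 < T k"
  defines "G \<equiv> (\<lambda>t. L t + (T(k := T k - 1)) t)"
  shows "int (wt G) = int (wt L) + int (wt T) - int k"
    and "int (deg G) = int (deg L) + int (deg T) - 1"
proof -
  have "G = (\<lambda>t. (T(k := T k - 1)) t + L t)" unfolding G_def by (auto simp: add.commute)
  then show "int (wt G) = int (wt L) + int (wt T) - int k"
    and "int (deg G) = int (deg L) + int (deg T) - 1"
    using core[OF b a jA pos] by auto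
qed

lemma bracket_props:
  assumes a: "a \<in> basis n" and b: "b \<in> basis n" and nz: "fst (bracket a b) \<noteq> 0"
  shows "WD n (snd (bracket a b)) = WD n a + WD n b - (int n - 1)"
    and "int (deg (fst (snd (bracket a b)))) = int (deg (fst a)) + int (deg (fst b)) - 1"
proof -
  obtain L k where ak: "a = (L,k)" by (cases a)
  obtain T j where bj: "b = (T,j)" by (cases b)
  note A = basis_D[OF a[unfolded ak]] and B = basis_D[OF b[unfolded bj]]
  have "j < k \<or> k < j" using nz unfolding ak bj bracket_def by (auto split: if_splits)
  then have "WD n (snd (bracket a b)) = WD n a + WD n b - (int n - 1)
     \<and> int (deg (fst (snd (bracket a b)))) = int (deg (fst a)) + int (deg (fst b)) - 1"
  proof
    assume jk: "j < k"
    then have "0 < L j" using nz unfolding ak bj bracket_def by auto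
    note C = core[OF a[unfolded ak] b[unfolded bj] _ _ this]
    show ?thesis using jk C A B unfolding ak bj bracket_def WD_def by auto
  next
    assume jk: "k < j"
    then have "0 < T k" using nz unfolding ak bj bracket_def by auto
    note C = core2[OF a[unfolded ak] b[unfolded bj] _ _ this]
    show ?thesis using jk C A B unfolding ak bj bracket_def WD_def by auto
  qed
  then show "WD n (snd (bracket a b)) = WD n a + WD n b - (int n - 1)"
    and "int (deg (fst (snd (bracket a b)))) = int (deg (fst a)) + int (deg (fst b)) - 1"
    by auto
qed

lemma hh_props:
  assumes "3 \<le> n" "-1 \<le> i"
  shows "0 \<le> hh n i" "i \<le> hh n i * (int n - 1)"
proof -
  define m where "m = int n - 1"
  have m: "2 \<le> m" using assms unfolding m_def by auto
  define q where "q = (i - 1) div m"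
  define r where "r = (i - 1) mod m"
  have e: "i - 1 = q * m + r" unfolding q_def r_def by simp
  have r: "0 \<le> r" "r < m" using m unfolding r_def by auto
  have "hh n i = q + 1" unfolding hh_def q_def m_def by simp
  moreover have "-1 \<le> q"
  proof (rule ccontr)
    assume "\<not> ?thesis"
    then have "q \<le> -2" by simp
    then have "q * m \<le> -2 * m" using m by (intro mult_right_mono) auto
    then show False using e r m assms by linarith
  qed
  moreover have "(q+1) * m = i - 1 - r + m" using e by (simp add: algebra_simps)
  ultimately show "0 \<le> hh n i" "i \<le> hh n i * (int n - 1)" using r unfolding m_def by auto
qed

lemma wt_le: "L \<in> Part m \<Longrightarrow> wt L \<le> m * deg L"
proof -
  assume P: "L \<in> Part m"
  have "(\<Sum>j\<in>{j. L j \<noteq> 0}. j * L j) \<le> (\<Sum>j\<in>{j. L j \<noteq> 0}. m * L j)"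
  proof (rule sum_mono)
    fix j assume "j \<in> {j. L j \<noteq> 0}"
    then have "j \<le> m" using P unfolding Part_def by (cases "j \<le> m") auto
    then show "j * L j \<le> m * L j" by simp
  qed
  then show ?thesis unfolding wt_def deg_def by (simp add: sum_distrib_left)
qed

lemma F1:
  assumes a: "a \<in> basis n" and d: "deg (fst a) \<le> 1"
  shows "WD n a \<le> int n - 1 \<and> (WD n a = int n - 1 \<longleftrightarrow> a = d1)"
proof -
  obtain L k where ak: "a = (L,k)" by (cases a)
  have k: "1 \<le> k" "k \<le> n" and P: "L \<in> Part (k-1)" using a unfolding ak basis_def by auto
  show ?thesis
  proof (cases "k = 1")
    case True
    then have "L = (\<lambda>_. 0)" using P unfolding Part_def by auto
    then show ?thesis using True unfolding ak WD_def d1_def wt_def deg_def by auto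
  next
    case False
    have w: "wt L \<le> (k-1) * deg L" using wt_le[OF P] .
    have "WD n a \<le> int n - 2"
    proof (cases "deg L = 0")
      case True
      then have "wt L = 0" using w by simp
      then show ?thesis using True False k unfolding ak WD_def by simp
    next
      case nz: False
      then have "deg L = 1" using d unfolding ak by simp
      then have "wt L \<le> k - 1" using w by simp
      then show ?thesis using k False \<open>deg L = 1\<close> unfolding ak WD_def by simp
    qed
    moreover have "a \<noteq> d1" using False unfolding ak d1_def by auto
    ultimately show ?thesis by auto
  qed
qed

lemma G:
  assumes n: "3 \<le> n" and a: "a \<in> basis n" and i: "-1 \<le> i" and l: "lev n i a \<le> i"
  shows "WD n a \<le> int n - 1 \<and> (WD n a = int n - 1 \<longleftrightarrow> a = d1)"
proof (cases "WD n a \<le> int n - 2")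
  case True
  have "a \<noteq> d1"
  proof
    assume "a = d1"
    then have "WD n a = int n - 1" unfolding d1_def WD_def wt_def deg_def by auto
    then show False using True by auto
  qed
  then show ?thesis using True by auto
next
  case False
  have h: "0 \<le> hh n i" "i \<le> hh n i * (int n - 1)" using hh_props[OF n i] by auto
  have "hh n i * (int n - 1) \<le> hh n i * WD n a" using False h by (intro mult_left_mono) auto
  then have "deg (fst a) \<le> 1" using l h unfolding lev_def by linarith
  then show ?thesis using F1[OF a] by auto
qed

theorem proposition2p3:
  fixes n :: nat and a b :: basis_elt
  assumes "3 \<le> n"
    and "a \<in> basis n" and "b \<in> basis n"
    and "fst (bracket a b) \<noteq> 0"
  shows "(\<forall>i::int. -1 \<le> i \<longrightarrow>
            lev n i (snd (bracket a b)) = lev n i a + lev n i b - hh n i * (int n - 1))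
       \<and> WD n (snd (bracket a b)) = WD n a + WD n b - (int n - 1)
       \<and> (\<forall>i j::int. -1 \<le> i \<longrightarrow> -1 \<le> j \<longrightarrow> lev n i a \<le> i \<longrightarrow> lev n j b \<le> j \<longrightarrow>
            WD n (snd (bracket a b)) \<le> min (WD n a) (WD n b)
            \<and> (WD n (snd (bracket a b)) = min (WD n a) (WD n b) \<longleftrightarrow> (a = d1 \<or> b = d1)))"
proof (intro conjI allI impI)
  note W = bracket_props[OF assms(2-4)]
  show "WD n (snd (bracket a b)) = WD n a + WD n b - (int n - 1)" by (rule W(1))
  fix i :: int
  show "lev n i (snd (bracket a b)) = lev n i a + lev n i b - hh n i * (int n - 1)"
    unfolding lev_def W by (simp add: algebra_simps)
next
  note W = bracket_props[OF assms(2-4)]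
  fix i j :: int
  assume i: "-1 \<le> i" and j: "-1 \<le> j" and la: "lev n i a \<le> i" and lb: "lev n j b \<le> j"
  note Ga = G[OF assms(1,2) i la] and Gb = G[OF assms(1,3) j lb]
  show "WD n (snd (bracket a b)) \<le> min (WD n a) (WD n b)" using W(1) Ga Gb by auto
  show "WD n (snd (bracket a b)) = min (WD n a) (WD n b) \<longleftrightarrow> (a = d1 \<or> b = d1)"
    using W(1) Ga Gb by auto
qed

end
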